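(* Let $(X,d)$ be a compact metric space containing infinitely many points, and let $C(X)$ be the space of continuous functions $f:X\to\mathbb{R}$ with the norm $\|f\|_\infty=\sup_{x\in X}|f(x)|$. For $f\in C(X)$ let $\omega(f,\delta)=\sup_{d(x,y)\le\delta}|f(x)-f(y)|$ and $\Omega(f)=\{\omega(f,\frac{1}{1+n})\}_{n=0}^\infty$. Then $\Omega$ satisfies Shapiro's theorem on $C(X)$: for every non-increasing sequence $\{\varepsilon_n\}$ of nonnegative reals with $\varepsilon_n\to0$ there exists $f\in C(X)$ with $\Omega(f)\in c_0$ and $\omega(f,\frac{1}{1+n})\neq\mathbf{O}(\varepsilon_n)$. *)

theory Defs
  imports "HOL-Analysis.Analysis" "HOL-Library.Landau_Symbols"
begin

definition modulus_of_continuity :: "'a::metric_space set \<Rightarrow> ('a \<Rightarrow> real) \<Rightarrow> real \<Rightarrow> real" where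
  "modulus_of_continuity S f \<delta> =
     Sup {\<bar>f x - f y\<bar> | x y. x \<in> S \<and> y \<in> S \<and> dist x y \<le> \<delta>}"

end

theory Submission
  imports Defs
begin

lemma mod_ge:
  assumes "\<And>x. x \<in> S \<Longrightarrow> \<bar>f x\<bar> \<le> B" "x \<in> S" "y \<in> S" "dist x y \<le> d"
  shows "\<bar>f x - f y\<bar> \<le> modulus_of_continuity S f d"
  unfolding modulus_of_continuity_def
proof (rule cSup_upper)
  show "\<bar>f x - f y\<bar> \<in> {\<bar>f x - f y\<bar> |x y. x \<in> S \<and> y \<in> S \<and> dist x y \<le> d}"
    using assms by blast
  show "bdd_above {\<bar>f x - f y\<bar> |x y. x \<in> S \<and> y \<in> S \<and> dist x y \<le> d}"
  proof (rule bdd_aboveI)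
    fix z assume "z \<in> {\<bar>f x - f y\<bar> |x y. x \<in> S \<and> y \<in> S \<and> dist x y \<le> d}"
    then obtain a b where "z = \<bar>f a - f b\<bar>" "a \<in> S" "b \<in> S" by blast
    with assms(1)[of a] assms(1)[of b] show "z \<le> 2 * B" by linarith
  qed
qed

lemma mod_le:
  assumes "S \<noteq> {}" "d \<ge> 0" "\<And>x y. x \<in> S \<Longrightarrow> y \<in> S \<Longrightarrow> dist x y \<le> d \<Longrightarrow> \<bar>f x - f y\<bar> \<le> e"
  shows "modulus_of_continuity S f d \<le> e"
  unfolding modulus_of_continuity_def
proof (rule cSup_least)
  obtain x where x: "x \<in> S" using assms by blast
  have "\<bar>f x - f x\<bar> \<in> {\<bar>f x - f y\<bar> |x y. x \<in> S \<and> y \<in> S \<and> dist x y \<le> d}"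
    using x assms(2) by force
  then show "{\<bar>f x - f y\<bar> |x y. x \<in> S \<and> y \<in> S \<and> dist x y \<le> d} \<noteq> {}"
    by blast
  show "\<And>z. z \<in> {\<bar>f x - f y\<bar> |x y. x \<in> S \<and> y \<in> S \<and> dist x y \<le> d} \<Longrightarrow> z \<le> e"
    using assms(3) by blast
qed

theorem mainTheorem8:
  fixes S :: "'a::metric_space set"
  assumes "compact S" and "infinite S"
  shows "\<forall>\<epsilon> :: nat \<Rightarrow> real.
           (decseq \<epsilon> \<and> (\<forall>n. \<epsilon> n \<ge> 0) \<and> \<epsilon> \<longlonglongrightarrow> 0) \<longrightarrow>
           (\<exists>f. continuous_on S f \<and>
                (\<lambda>n. modulus_of_continuity S f (1 / (1 + real n))) \<longlonglongrightarrow> 0 \<and>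
                (\<lambda>n. modulus_of_continuity S f (1 / (1 + real n))) \<notin> O(\<epsilon>))"
proof (intro allI impI)
  fix \<epsilon> :: "nat \<Rightarrow> real"
  assume H: "decseq \<epsilon> \<and> (\<forall>n. \<epsilon> n \<ge> 0) \<and> \<epsilon> \<longlonglongrightarrow> 0"
  then have edec: "decseq \<epsilon>" and enn: "\<And>n. \<epsilon> n \<ge> 0" and elim: "\<epsilon> \<longlonglongrightarrow> 0" by auto
  obtain p where pS: "p \<in> S" and plim: "p islimpt S"
    using assms compact_eq_Bolzano_Weierstrass by blast
  define \<eta> where "\<eta> n = sqrt (\<epsilon> n) + 1 / (real n + 1)" for n
  have \<eta>dec: "\<eta> (Suc n) \<le> \<eta> n" for n
  proof -
    have "\<epsilon> (Suc n) \<le> \<epsilon> n" using edec by (simp add: decseq_Suc_iff)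
    then have "sqrt (\<epsilon> (Suc n)) \<le> sqrt (\<epsilon> n)" by simp
    moreover have "1 / (real (Suc n) + 1) \<le> 1 / (real n + 1)"
      by (simp add: frac_le)
    ultimately show ?thesis unfolding \<eta>_def by linarith
  qed
  have \<eta>lim: "\<eta> \<longlonglongrightarrow> 0"
  proof -
    have "(\<lambda>n. sqrt (\<epsilon> n)) \<longlonglongrightarrow> sqrt 0" by (intro tendsto_intros elim)
    moreover have "(\<lambda>n. 1 / (real n + 1)) \<longlonglongrightarrow> 0"
      using LIMSEQ_inverse_real_of_nat by (simp add: inverse_eq_divide add.commute)
    ultimately have "(\<lambda>n. sqrt (\<epsilon> n) + 1 / (real n + 1)) \<longlonglongrightarrow> 0 + 0"
      by (intro tendsto_add) auto
    then show ?thesis unfolding \<eta>_def by simp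
  qed
  define c where "c n = \<eta> n - \<eta> (Suc n)" for n
  have cnn: "c n \<ge> 0" for n using \<eta>dec[of n] unfolding c_def by simp
  have csums: "(\<lambda>j. c (j + m)) sums \<eta> m" for m
  proof -
    have "(\<lambda>j. \<eta> (j + m)) \<longlonglongrightarrow> 0"
      using LIMSEQ_ignore_initial_segment[OF \<eta>lim, of m] by simp
    from telescope_sums'[OF this] show ?thesis unfolding c_def by simp
  qed
  have csum: "summable c" using csums[of 0] by (simp add: sums_summable)
  define g where "g j x = c j * min 1 ((real j + 2) * dist x p)" for j x
  have gnn: "0 \<le> g j x" for j x unfolding g_def using cnn[of j] by simp
  have gle: "g j x \<le> c j" for j x unfolding g_def using cnn[of j]
    by (simp add: mult_left_le)
  have gsum: "summable (\<lambda>j. g j x)" for x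
    by (rule summable_comparison_test[OF _ csum]) (use gnn gle in auto)
  define f where "f x = (\<Sum>j. g j x)" for x
  have fnn: "0 \<le> f x" for x unfolding f_def by (intro suminf_nonneg gsum gnn)
  have fle: "f x \<le> \<eta> 0" for x
  proof -
    have "f x \<le> suminf c" unfolding f_def by (intro suminf_le gle gsum csum)
    also have "suminf c = \<eta> 0" using csums[of 0] sums_unique by fastforce
    finally show ?thesis .
  qed
  have fabs: "\<bar>f x\<bar> \<le> \<eta> 0" for x using fnn[of x] fle[of x] by simp
  have fp: "f p = 0" unfolding f_def g_def by simp
  have fcont: "continuous_on S f"
  proof (rule uniform_limit_theorem)
    show "uniform_limit S (\<lambda>n x. \<Sum>i<n. g i x) f sequentially"
      unfolding f_def
      by (rule Weierstrass_m_test[OF _ csum]) (use gnn gle in auto)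
    show "\<forall>\<^sub>F n in sequentially. continuous_on S (\<lambda>x. \<Sum>i<n. g i x)"
      unfolding g_def by (intro always_eventually allI continuous_intros)
  qed simp
  have key: "\<eta> n \<le> f x" if "1 / (real n + 2) \<le> dist x p" for n x
  proof -
    have pos: "0 < real n + 2" by simp
    have "1 \<le> (real n + 2) * dist x p" using that pos by (simp add: field_simps)
    then have sat: "g (j + n) x = c (j + n)" for j
    proof -
      assume a: "1 \<le> (real n + 2) * dist x p"
      have "(real n + 2) * dist x p \<le> (real (j + n) + 2) * dist x p"
        by (intro mult_right_mono) auto
      with a show ?thesis unfolding g_def by simp
    qed
    have "f x = (\<Sum>j. g (j + n) x) + sum (\<lambda>j. g j x) {..<n}"
      unfolding f_def by (rule suminf_split_initial_segment[OF gsum])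
    also have "(\<Sum>j. g (j + n) x) = \<eta> n" using sat csums[of n] sums_unique by fastforce
    finally show ?thesis using gnn by (simp add: sum_nonneg)
  qed
  define M where "M n = modulus_of_continuity S f (1 / (1 + real n))" for n
  have Mnn: "0 \<le> M n" for n
    using mod_ge[of S f "\<eta> 0" p p, OF fabs pS pS] unfolding M_def by simp
  have Mlim: "M \<longlonglongrightarrow> 0"
  proof (rule LIMSEQ_I)
    fix e :: real assume e: "0 < e"
    have "uniformly_continuous_on S f" using assms(1) fcont compact_uniformly_continuous by blast
    then obtain d where d: "d > 0" "\<And>x y. x \<in> S \<Longrightarrow> y \<in> S \<Longrightarrow> dist y x < d \<Longrightarrow> dist (f y) (f x) < e/2"
      unfolding uniformly_continuous_on_def using e by (metis half_gt_zero)
    obtain N where N: "inverse (real (Suc N)) < d" using d(1) reals_Archimedean by blast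
    show "\<exists>no. \<forall>n\<ge>no. norm (M n - 0) < e"
    proof (intro exI allI impI)
      fix n assume n: "N \<le> n"
      have "1 / (1 + real n) \<le> inverse (real (Suc N))"
        using n by (simp add: inverse_eq_divide frac_le)
      then have dd: "1 / (1 + real n) < d" using N by linarith
      have "M n \<le> e/2" unfolding M_def
      proof (rule mod_le)
        show "S \<noteq> {}" using pS by blast
        show "0 \<le> 1 / (1 + real n)" by simp
        fix x y assume "x \<in> S" "y \<in> S" "dist x y \<le> 1 / (1 + real n)"
        then have "dist (f x) (f y) < e/2" using d(2)[of y x] dd by simp
        then show "\<bar>f x - f y\<bar> \<le> e/2" by (simp add: dist_real_def)
      qed
      then show "norm (M n - 0) < e" using Mnn[of n] e by simp
    qed
  qed
  have notO: "M \<notin> O(\<epsilon>)"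
  proof
    assume "M \<in> O(\<epsilon>)"
    then obtain c0 where c0: "c0 > 0" "eventually (\<lambda>n. norm (M n) \<le> c0 * norm (\<epsilon> n)) sequentially"
      by (elim landau_o.bigE)
    have "eventually (\<lambda>n. \<epsilon> n < 1 / c0^2) sequentially"
      using order_tendstoD(2)[OF elim, of "1 / c0^2"] c0(1) by simp
    with c0(2) obtain N where N: "\<And>n. n \<ge> N \<Longrightarrow> norm (M n) \<le> c0 * norm (\<epsilon> n) \<and> \<epsilon> n < 1 / c0^2"
      unfolding eventually_sequentially by (metis (no_types, lifting) eventually_conj eventually_sequentially)
    obtain x where x: "x \<in> S" "x \<noteq> p" "dist x p < 1 / (real N + 2)"
      using plim unfolding islimpt_approachable by (metis divide_pos_pos of_nat_0_le_iff add_nonneg_pos zero_less_numeral zero_less_one)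
    define r where "r = dist x p"
    have rpos: "r > 0" using x unfolding r_def by simp
    define k where "k = nat \<lfloor>1 / r\<rfloor>"
    have k1: "real k \<le> 1 / r" and k2: "1 / r < real k + 1"
      unfolding k_def using rpos by (auto simp: of_nat_nat floor_le_iff)
    have "real N + 2 < 1 / r" using x(3) rpos unfolding r_def
      by (simp add: field_simps)
    then have "real (N + 1) < real k" using k2 by simp
    then have "N + 1 < k" by linarith
    then have kN: "real N + 2 \<le> real k" by simp
    define n where "n = k - 1"
    have nk: "real n + 1 = real k" using kN unfolding n_def by (simp add: of_nat_diff)
    have nN: "N \<le> n" using kN nk by linarith
    have r1: "r \<le> 1 / (1 + real n)" using k1 nk rpos by (simp add: field_simps)
    have e2: "real n + 2 = real k + 1" using nk by simp
    have "1 < r * (real k + 1)" using k2 rpos by (simp add: field_simps)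
    then have "1 \<le> r * (real n + 2)" unfolding e2 by simp
    then have r2: "1 / (real n + 2) \<le> r" by (simp add: field_simps)
    have "\<eta> n \<le> f x" using key[of n x] r2 unfolding r_def by simp
    also have "f x = \<bar>f x - f p\<bar>" using fp fnn[of x] by simp
    also have "\<dots> \<le> M n" unfolding M_def
      by (rule mod_ge[OF fabs x(1) pS]) (use r1 in \<open>simp add: r_def\<close>)
    also have "\<dots> \<le> c0 * \<epsilon> n" using N[OF nN] Mnn[of n] enn[of n] by simp
    also have "\<dots> \<le> sqrt (\<epsilon> n)"
    proof -
      have s: "sqrt (\<epsilon> n) < 1 / c0"
        using N[OF nN] c0(1) enn[of n] real_sqrt_less_mono[of "\<epsilon> n" "1/c0^2"]
        by (simp add: real_sqrt_divide)
      have "c0 * \<epsilon> n = c0 * sqrt (\<epsilon> n) * sqrt (\<epsilon> n)"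
        using enn[of n] by (simp add: mult.assoc)
      also have "\<dots> \<le> 1 * sqrt (\<epsilon> n)"
        using s c0(1) enn[of n] by (intro mult_right_mono) (auto simp: field_simps)
      finally show ?thesis by simp
    qed
    finally show False unfolding \<eta>_def by simp
  qed
  show "\<exists>f. continuous_on S f \<and>
                (\<lambda>n. modulus_of_continuity S f (1 / (1 + real n))) \<longlonglongrightarrow> 0 \<and>
                (\<lambda>n. modulus_of_continuity S f (1 / (1 + real n))) \<notin> O(\<epsilon>)"
    using fcont Mlim notO unfolding M_def by blast
qed

end
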